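(* Let $c\in\mathbb{R}$, $\sigma^2>0$, $\gamma=0$, and $\alpha_0=1$. Define recursively, for $n\ge2$, $$\alpha_{n-1}=\frac{\lambda^{n-1}\sigma^2+(1-\delta^{n-1})^2c^2}{\lambda^{n-1}\sigma^2+(1-\delta^{n-1})^2c^2+\sigma^2},$$ where $\delta^1=\alpha_0$, $\lambda^1=\alpha_0^2$, and for $m>1$, $\delta^m=\alpha_{m-1}+(1-\alpha_{m-1})\delta^{m-1}$, $\lambda^m=\alpha_{m-1}^2+(1-\alpha_{m-1})^2\lambda^{m-1}$. Then $\alpha_{n-1}=\frac1n$ for all $n\ge1$.
   Context: This is the prediction-error-minimizing stepsize rule for approximate value iteration in a single-state, single-action problem with i.i.d. rewards of mean $c$ and variance $\sigma^2$, specialized to discount factor $\gamma=0$ (the stationary case). *)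

theory Defs
  imports Complex_Main
begin

text \<open>Prediction-error-minimizing stepsizes, single state/action, discount gamma = 0.
  pem_step c s2 k = (alpha_k, delta^(k+1), lambda^(k+1)), where s2 is sigma^2.\<close>
fun pem_step :: "real \<Rightarrow> real \<Rightarrow> nat \<Rightarrow> real \<times> real \<times> real" where
  "pem_step c s2 0 = (1, 1, 1)"
| "pem_step c s2 (Suc k) =
     (let (a, d, l) = pem_step c s2 k;
          a' = (l * s2 + (1 - d)^2 * c^2) / (l * s2 + (1 - d)^2 * c^2 + s2)
      in (a', a' + (1 - a') * d, a'^2 + (1 - a')^2 * l))"

definition pem_alpha :: "real \<Rightarrow> real \<Rightarrow> nat \<Rightarrow> real" where
  "pem_alpha c s2 k = fst (pem_step c s2 k)"

definition pem_delta :: "real \<Rightarrow> real \<Rightarrow> nat \<Rightarrow> real" where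
  "pem_delta c s2 m = fst (snd (pem_step c s2 (m - 1)))"

definition pem_lambda :: "real \<Rightarrow> real \<Rightarrow> nat \<Rightarrow> real" where
  "pem_lambda c s2 m = snd (snd (pem_step c s2 (m - 1)))"

end

theory Submission
  imports Defs
begin

lemma inv: "s2 > 0 \<Longrightarrow> pem_step c s2 k = (1 / real (Suc k), 1, 1 / real (Suc k))"
proof (induction k)
  case 0 then show ?case by simp
next
  case (Suc k)
  have a: "(1 / real (Suc k) * s2) / (1 / real (Suc k) * s2 + s2) = 1 / real (Suc (Suc k))"
  proof -
    have "1 / real (Suc k) * s2 + s2 = s2 * (real (Suc (Suc k)) / real (Suc k))"
      by (simp add: field_simps)
    have "s2 * 2 + (s2 * (real k * real k) + s2 * (real k * 3)) > 0"
      using Suc.prems by (simp add: add_pos_nonneg)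
    thus ?thesis using Suc.prems by (simp add: field_simps)
  qed
  have l: "(1 / real (Suc (Suc k)))^2 + (1 - 1 / real (Suc (Suc k)))^2 * (1 / real (Suc k))
        = 1 / real (Suc (Suc k))"
  proof -
    have g: "\<And>x::real. x \<ge> 0 \<Longrightarrow> (1/(x+2))^2 + (1 - 1/(x+2))^2 * (1/(x+1)) = 1/(x+2)"
    proof -
      fix x :: real assume x: "x \<ge> 0"
      have e1: "1 - 1/(x+2) = (x+1)/(x+2)" using x by (simp add: field_simps)
      have "(1/(x+2))^2 + ((x+1)/(x+2))^2 * (1/(x+1)) = 1/(x+2)^2 + (x+1)/(x+2)^2"
        using x by (simp add: power_divide power2_eq_square)
      also have "\<dots> = (x+2)/(x+2)^2" by (simp add: add_divide_distrib[symmetric])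
      also have "\<dots> = 1/(x+2)" using x by (simp add: power2_eq_square)
      finally show "(1/(x+2))^2 + (1 - 1/(x+2))^2 * (1/(x+1)) = 1/(x+2)" using e1 by simp
    qed
    show ?thesis using g[of "real k"] by (simp add: add.commute)
  qed
  show ?case using Suc a l by (simp add: Let_def)
qed

theorem corollary3:
  fixes c s2 :: real and n :: nat
  assumes "s2 > 0" and "n \<ge> 1"
  shows "pem_alpha c s2 (n - 1) = 1 / real n"
  using inv[OF assms(1), of c "n-1"] assms(2) by (simp add: pem_alpha_def)

end
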